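(* Let $M=\mathbb{R}\times\mathbb{C}\subset\mathbb{C}^2$. Then every $C^2$-smooth totally real disc contained in $M$ is polynomially convex.
   Context: For a compact $K\subset\mathbb{C}^n$, $\widehat{K}:=\{z\in\mathbb{C}^n : |p(z)|\le \sup_K|p| \text{ for all holomorphic polynomials } p\}$, and $K$ is polynomially convex if $\widehat{K}=K$. A submanifold $N\subset\mathbb{C}^n$ is totally real if $T_pN\cap iT_pN=\{0\}$ for all $p\in N$. A $C^2$-smooth totally real disc is a compact subset of a $C^2$-smooth totally real submanifold of $\mathbb{C}^2$ which is $C^2$-diffeomorphic to the closed unit disc in the plane. *)

theory Defs
  imports "HOL-Analysis.Analysis"
begin

text \<open>C^2 = complex \<times> complex, viewed as the real Euclidean space R^4.\<close>

definition cmul_i :: "complex \<times> complex \<Rightarrow> complex \<times> complex" where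
  "cmul_i v = (\<i> * fst v, \<i> * snd v)"

text \<open>f is C^2-smooth on S: f is C^2 (twice Frechet differentiable with continuous
  second derivative) on some open neighbourhood of S.  For open S this is ordinary C^2.\<close>
definition C2_on :: "'a::euclidean_space set \<Rightarrow> ('a \<Rightarrow> 'b::euclidean_space) \<Rightarrow> bool" where
  "C2_on S f \<longleftrightarrow> (\<exists>V Df D2f. open V \<and> S \<subseteq> V \<and>
      (\<forall>x\<in>V. (f has_derivative blinfun_apply (Df x)) (at x) \<and>
               (Df has_derivative blinfun_apply (D2f x)) (at x)) \<and>
      continuous_on V D2f)"

text \<open>N is an (embedded) C^2 totally real submanifold of C^2, of the real dimension
  DIM('a): locally N is the image of a C^2 embedding (homeomorphism onto an open
  piece of N with injective differential) of an open subset of 'a, and every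
  tangent space T satisfies T \<inter> iT = {0}.\<close>
definition totally_real_submanifold ::
    "'a::euclidean_space itself \<Rightarrow> (complex \<times> complex) set \<Rightarrow> bool" where
  "totally_real_submanifold _ N \<longleftrightarrow>
     (\<forall>p\<in>N. \<exists>(U::'a set) W \<phi>. open U \<and> open W \<and> p \<in> W \<and> C2_on U \<phi> \<and>
        inj_on \<phi> U \<and> \<phi> ` U = N \<inter> W \<and> continuous_on (N \<inter> W) (inv_into U \<phi>) \<and>
        (\<forall>x\<in>U. \<exists>L. (\<phi> has_derivative L) (at x) \<and> inj L \<and>
              (\<forall>v w. L v = cmul_i (L w) \<longrightarrow> L v = 0)))"

definition C2_diffeomorphic ::
    "'a::euclidean_space set \<Rightarrow> 'b::euclidean_space set \<Rightarrow> bool" where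
  "C2_diffeomorphic A B \<longleftrightarrow>
     (\<exists>h g. homeomorphism A B h g \<and> C2_on A h \<and> C2_on B g)"

text \<open>A C^2-smooth totally real disc in C^2.  The closed unit disc in the plane is
  cball 0 1 in complex (= R^2).\<close>
definition totally_real_disc :: "'a::euclidean_space itself \<Rightarrow> (complex \<times> complex) set \<Rightarrow> bool" where
  "totally_real_disc T D \<longleftrightarrow>
     (\<exists>N. totally_real_submanifold T N \<and> D \<subseteq> N \<and> compact D \<and>
          C2_diffeomorphic (cball (0::complex) 1) D)"

definition hol_poly2 :: "(complex \<times> complex \<Rightarrow> complex) \<Rightarrow> bool" where
  "hol_poly2 p \<longleftrightarrow> (\<exists>n (c :: nat \<Rightarrow> nat \<Rightarrow> complex).
      p = (\<lambda>(z, w). \<Sum>i<n. \<Sum>j<n. c i j * z ^ i * w ^ j))"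

definition poly_hull :: "(complex \<times> complex) set \<Rightarrow> (complex \<times> complex) set" where
  "poly_hull K = {z. \<forall>p. hol_poly2 p \<longrightarrow> norm (p z) \<le> (SUP y\<in>K. norm (p y))}"

definition polynomially_convex :: "(complex \<times> complex) set \<Rightarrow> bool" where
  "polynomially_convex K \<longleftrightarrow> poly_hull K = K"

definition M_RC :: "(complex \<times> complex) set" where
  "M_RC = {(z, w). z \<in> \<real>}"

end

theory Submission
  imports Defs "HOL-Computational_Algebra.Polynomial"
begin

definition papprox :: "complex set \<Rightarrow> (complex \<Rightarrow> complex) \<Rightarrow> bool" where
  "papprox K f \<longleftrightarrow> (\<forall>e>0. \<exists>q. \<forall>w\<in>K. norm (poly q w - f w) < e)"

lemma papprox_poly: "papprox K (poly q)"
  unfolding papprox_def by (intro allI impI exI[of _ q]) auto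

lemma papprox_const: "papprox K (\<lambda>w. c)"
proof -
  have "poly [:c:] = (\<lambda>w::complex. c)" by (rule ext) simp
  then show ?thesis using papprox_poly[of K "[:c:]"] by simp
qed

lemma papprox_id: "papprox K (\<lambda>w. w)"
proof -
  have "poly [:0,1:] = (\<lambda>w::complex. w)" by (rule ext) simp
  then show ?thesis using papprox_poly[of K "[:0,1:]"] by simp
qed

lemma papprox_add:
  assumes "papprox K f" "papprox K g"
  shows "papprox K (\<lambda>w. f w + g w)"
  unfolding papprox_def
proof (intro allI impI)
  fix e :: real assume e: "e > 0"
  obtain q1 where q1: "\<forall>w\<in>K. norm (poly q1 w - f w) < e/2"
    using assms(1) e unfolding papprox_def by (meson half_gt_zero)
  obtain q2 where q2: "\<forall>w\<in>K. norm (poly q2 w - g w) < e/2"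
    using assms(2) e unfolding papprox_def by (meson half_gt_zero)
  show "\<exists>q. \<forall>w\<in>K. norm (poly q w - (f w + g w)) < e"
  proof (intro exI[of _ "q1 + q2"] ballI)
    fix w assume w: "w \<in> K"
    have "norm (poly (q1 + q2) w - (f w + g w)) = norm ((poly q1 w - f w) + (poly q2 w - g w))"
      by (simp add: algebra_simps)
    also have "\<dots> \<le> norm (poly q1 w - f w) + norm (poly q2 w - g w)" by (rule norm_triangle_ineq)
    also have "\<dots> < e" using q1 q2 w by force
    finally show "norm (poly (q1 + q2) w - (f w + g w)) < e" .
  qed
qed

lemma poly_bounded_on_compact:
  fixes q :: "complex poly"
  assumes "compact K"
  shows "\<exists>B\<ge>0. \<forall>w\<in>K. norm (poly q w) \<le> B"
proof -
  have pe: "poly q = (\<lambda>w. \<Sum>i\<le>degree q. coeff q i * w ^ i)"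
    by (rule ext) (simp add: poly_altdef)
  have "continuous_on K (poly q)" unfolding pe by (intro continuous_intros)
  then have "compact (poly q ` K)"
    by (intro compact_continuous_image assms)
  then obtain B where "\<forall>x\<in>poly q ` K. norm x \<le> B"
    using compact_imp_bounded bounded_iff by metis
  then show ?thesis by (intro exI[of _ "max B 0"]) auto
qed

lemma papprox_bounded:
  assumes "compact K" "papprox K f"
  shows "\<exists>B\<ge>0. \<forall>w\<in>K. norm (f w) \<le> B"
proof -
  obtain q where q: "\<forall>w\<in>K. norm (poly q w - f w) < 1"
    using assms(2) unfolding papprox_def by (meson zero_less_one)
  obtain B where B: "B \<ge> 0" "\<forall>w\<in>K. norm (poly q w) \<le> B"
    using poly_bounded_on_compact[OF assms(1)] by blast
  show ?thesis
  proof (intro exI[of _ "B + 1"] conjI ballI)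
    fix w assume w: "w \<in> K"
    have "norm (f w) \<le> norm (poly q w) + norm (poly q w - f w)"
      by (metis norm_triangle_sub add.commute norm_minus_commute)
    then show "norm (f w) \<le> B + 1" using q B w by force
  qed (use B in auto)
qed

lemma papprox_mult:
  assumes K: "compact K" and f: "papprox K f" and g: "papprox K g"
  shows "papprox K (\<lambda>w. f w * g w)"
  unfolding papprox_def
proof (intro allI impI)
  fix e :: real assume e: "e > 0"
  obtain Bf where Bf: "Bf \<ge> 0" "\<forall>w\<in>K. norm (f w) \<le> Bf"
    using papprox_bounded[OF K f] by blast
  obtain Bg where Bg: "Bg \<ge> 0" "\<forall>w\<in>K. norm (g w) \<le> Bg"
    using papprox_bounded[OF K g] by blast
  define \<eta> where "\<eta> = min 1 (e / (Bf + Bg + 2))"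
  have \<eta>: "\<eta> > 0" "\<eta> \<le> 1" "\<eta> * (Bf + Bg + 1) < e"
  proof -
    show "\<eta> > 0" using e Bf Bg by (simp add: \<eta>_def)
    show "\<eta> \<le> 1" by (simp add: \<eta>_def)
    have "\<eta> * (Bf + Bg + 1) \<le> e / (Bf + Bg + 2) * (Bf + Bg + 1)"
      using Bf Bg by (intro mult_right_mono) (auto simp: \<eta>_def)
    also have "\<dots> < e / (Bf + Bg + 2) * (Bf + Bg + 2)"
      using Bf Bg e by (intro mult_strict_left_mono) auto
    also have "\<dots> = e" using Bf Bg by simp
    finally show "\<eta> * (Bf + Bg + 1) < e" .
  qed
  obtain q1 where q1: "\<forall>w\<in>K. norm (poly q1 w - f w) < \<eta>"
    using f \<eta> unfolding papprox_def by blast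
  obtain q2 where q2: "\<forall>w\<in>K. norm (poly q2 w - g w) < \<eta>"
    using g \<eta> unfolding papprox_def by blast
  show "\<exists>q. \<forall>w\<in>K. norm (poly q w - f w * g w) < e"
  proof (intro exI[of _ "q1 * q2"] ballI)
    fix w assume w: "w \<in> K"
    have n1: "norm (poly q1 w) \<le> Bf + 1"
    proof -
      have "norm (poly q1 w) \<le> norm (f w) + norm (poly q1 w - f w)"
        by (metis norm_triangle_sub)
      then show ?thesis using q1 Bf w \<eta> by force
    qed
    have "norm (poly (q1 * q2) w - f w * g w)
          = norm (poly q1 w * (poly q2 w - g w) + (poly q1 w - f w) * g w)"
      by (simp add: algebra_simps)
    also have "\<dots> \<le> norm (poly q1 w) * norm (poly q2 w - g w) + norm (poly q1 w - f w) * norm (g w)"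
      by (metis norm_mult norm_triangle_ineq)
    also have "\<dots> \<le> (Bf + 1) * \<eta> + \<eta> * Bg"
      using n1 q1 q2 Bg w Bf \<eta>(1)
      by (intro add_mono mult_mono) (auto intro: less_imp_le)
    also have "\<dots> = \<eta> * (Bf + Bg + 1)" by (simp add: algebra_simps)
    also have "\<dots> < e" by (rule \<eta>)
    finally show "norm (poly (q1 * q2) w - f w * g w) < e" .
  qed
qed

lemma papprox_limit:
  assumes "\<And>e. e > 0 \<Longrightarrow> \<exists>g. papprox K g \<and> (\<forall>w\<in>K. norm (g w - f w) < e)"
  shows "papprox K f"
  unfolding papprox_def
proof (intro allI impI)
  fix e :: real assume e: "e > 0"
  obtain g where g: "papprox K g" "\<forall>w\<in>K. norm (g w - f w) < e/2"
    using assms[of "e/2"] e by auto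
  obtain q where q: "\<forall>w\<in>K. norm (poly q w - g w) < e/2"
    using g(1) e unfolding papprox_def by (meson half_gt_zero)
  show "\<exists>q. \<forall>w\<in>K. norm (poly q w - f w) < e"
  proof (intro exI[of _ q] ballI)
    fix w assume w: "w \<in> K"
    have "norm (poly q w - f w) \<le> norm (poly q w - g w) + norm (g w - f w)"
      by (metis norm_diff_triangle_ineq diff_add_cancel add_diff_eq norm_triangle_ineq4 norm_triangle_sub
          diff_diff_eq2 norm_diff_triangle_le order_refl)
    then show "norm (poly q w - f w) < e" using q g w by force
  qed
qed

lemma papprox_sum:
  assumes K: "compact K" and "finite I" and "\<And>i. i \<in> I \<Longrightarrow> papprox K (f i)"
  shows "papprox K (\<lambda>w. \<Sum>i\<in>I. f i w)"
  using assms(2,3)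
proof (induction I rule: finite_induct)
  case empty
  then show ?case using papprox_const[of K 0] by simp
next
  case (insert x F)
  then show ?case using papprox_add[of K "f x" "\<lambda>w. \<Sum>i\<in>F. f i w"] by simp
qed

lemma papprox_power:
  assumes K: "compact K" and "papprox K f"
  shows "papprox K (\<lambda>w. f w ^ n)"
proof (induction n)
  case 0
  then show ?case using papprox_const[of K 1] by simp
next
  case (Suc n)
  then show ?case using papprox_mult[OF K assms(2) Suc] by simp
qed

lemma geom_identity:
  fixes w a b :: complex
  assumes "w \<noteq> a" "w \<noteq> b"
  shows "(\<Sum>n<N. (b - a) ^ n * (1 / (w - a)) ^ Suc n) - 1 / (w - b)
         = - (((b - a) / (w - a)) ^ N / (w - b))"
proof -
  define r where "r = (b - a) / (w - a)"
  have wa: "w - a \<noteq> 0" using assms by simp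
  have wb: "w - b \<noteq> 0" using assms by simp
  have r1: "r \<noteq> 1" using assms wa by (auto simp: r_def field_simps)
  have "(\<Sum>n<N. (b - a) ^ n * (1 / (w - a)) ^ Suc n) = (1 / (w - a)) * (\<Sum>n<N. r ^ n)"
    by (simp add: sum_distrib_left r_def power_divide field_simps)
  also have "\<dots> = (1 / (w - a)) * ((r ^ N - 1) / (r - 1))"
    using geometric_sum[OF r1] by simp
  also have "(r - 1) * (w - a) = b - w" using wa by (simp add: r_def field_simps)
  then have "(1 / (w - a)) * ((r ^ N - 1) / (r - 1)) = (r ^ N - 1) / (b - w)"
    using wa r1 by (simp add: field_simps)
  finally show ?thesis using wb assms
    by (simp add: r_def[symmetric] field_simps)
qed

lemma half_pow_small:
  fixes C e :: real
  assumes "e > 0" "C \<ge> 0"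
  shows "\<exists>N. (1/2) ^ N * C < e"
proof -
  obtain N where "(1/2::real) ^ N < e / (C + 1)"
    using real_arch_pow_inv[of "e / (C + 1)" "1/2"] assms by auto
  then have "(1/2) ^ N * C \<le> e / (C + 1) * C"
    using assms by (intro mult_right_mono) auto
  also have "\<dots> < e" using assms by (simp add: field_simps)
  finally show ?thesis by blast
qed

lemma papprox_ball:
  assumes K: "compact K" and d: "d > 0" "\<forall>w\<in>K. d \<le> norm (w - a)"
    and pa: "papprox K (\<lambda>w. 1 / (w - a))" and b: "norm (b - a) \<le> d / 2"
  shows "papprox K (\<lambda>w. 1 / (w - b))"
proof (rule papprox_limit)
  fix e :: real assume e: "e > 0"
  obtain N where N: "(1/2) ^ N * (2 / d) < e"
    using half_pow_small[OF e, of "2/d"] d by auto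
  define g where "g = (\<lambda>w. \<Sum>n<N. (b - a) ^ n * (1 / (w - a)) ^ Suc n)"
  have "papprox K g"
    unfolding g_def
    by (intro papprox_sum K papprox_mult papprox_const papprox_power pa) auto
  moreover have "\<forall>w\<in>K. norm (g w - 1 / (w - b)) < e"
  proof
    fix w assume w: "w \<in> K"
    have wa: "d \<le> norm (w - a)" using d w by auto
    have wb: "d / 2 \<le> norm (w - b)"
    proof -
      have "norm (w - a) \<le> norm (w - b) + norm (b - a)"
        by (metis norm_triangle_ineq diff_add_cancel add_diff_eq)
      then show ?thesis using wa b by linarith
    qed
    have "w \<noteq> a" "w \<noteq> b" using wa wb d by auto
    then have "g w - 1 / (w - b) = - (((b - a) / (w - a)) ^ N / (w - b))"
      unfolding g_def by (rule geom_identity)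
    then have "norm (g w - 1 / (w - b)) = (norm (b - a) / norm (w - a)) ^ N / norm (w - b)"
      by (simp add: norm_divide norm_power)
    also have "\<dots> \<le> (1/2) ^ N / (d / 2)"
    proof -
      have "norm (b - a) / norm (w - a) \<le> 1/2"
        using wa b d by (simp add: divide_le_eq field_simps)
      then have "(norm (b - a) / norm (w - a)) ^ N \<le> (1/2) ^ N"
        by (intro power_mono) auto
      then show ?thesis using wb d by (intro frac_le) auto
    qed
    also have "\<dots> = (1/2) ^ N * (2 / d)" by simp
    also have "\<dots> < e" by (rule N)
    finally show "norm (g w - 1 / (w - b)) < e" .
  qed
  ultimately show "\<exists>g. papprox K g \<and> (\<forall>w\<in>K. norm (g w - 1 / (w - b)) < e)" by blast
qed

lemma papprox_far:
  assumes K: "compact K" and B: "B \<ge> 0" "\<forall>w\<in>K. norm w \<le> B" and a: "norm a \<ge> 2 * B + 2"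
  shows "papprox K (\<lambda>w. 1 / (w - a))"
proof (rule papprox_limit)
  fix e :: real assume e: "e > 0"
  obtain N where N: "(1/2) ^ N * 1 < e"
    using half_pow_small[OF e, of 1] by auto
  have a0: "a \<noteq> 0" using a B by auto
  define g where "g = (\<lambda>w. \<Sum>n<N. (-1) * (1 / a) ^ Suc n * w ^ n)"
  have "papprox K g"
    unfolding g_def
    by (intro papprox_sum K papprox_mult papprox_const papprox_power papprox_id) auto
  moreover have "\<forall>w\<in>K. norm (g w - 1 / (w - a)) < e"
  proof
    fix w assume w: "w \<in> K"
    have wB: "norm w \<le> B" using B w by auto
    have wa: "1 \<le> norm (w - a)"
    proof -
      have "norm a \<le> norm (w - a) + norm w"
        by (metis norm_triangle_ineq4 norm_minus_commute diff_diff_cancel norm_triangle_sub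
            add.commute norm_diff_ineq le_diff_eq)
      then show ?thesis using a wB B by linarith
    qed
    have wna: "w \<noteq> a" using wa by auto
    define r where "r = w / a"
    have r1: "r \<noteq> 1" using wna a0 by (auto simp: r_def)
    have "g w = - ((1 / a) * (\<Sum>n<N. r ^ n))"
      by (simp add: g_def r_def sum_distrib_left power_divide field_simps sum_negf)
    also have "\<dots> = - ((1 / a) * ((r ^ N - 1) / (r - 1)))"
      using geometric_sum[OF r1] by simp
    also have "\<dots> = (1 - r ^ N) / (w - a)"
      using a0 wna r1 by (simp add: r_def field_simps)
    finally have gw: "g w = (1 - r ^ N) / (w - a)" .
    have "g w - 1 / (w - a) = ((1 - r ^ N) - 1) / (w - a)"
      unfolding gw by (rule diff_divide_distrib[symmetric])
    then have "g w - 1 / (w - a) = - (r ^ N / (w - a))" by simp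
    then have "norm (g w - 1 / (w - a)) = (norm w / norm a) ^ N / norm (w - a)"
      by (simp add: norm_divide norm_power r_def)
    also have "\<dots> \<le> (1/2) ^ N / 1"
    proof -
      have "norm w / norm a \<le> 1/2"
        using wB a B a0 by (simp add: divide_le_eq field_simps)
      then have "(norm w / norm a) ^ N \<le> (1/2) ^ N"
        by (intro power_mono) auto
      then show ?thesis using wa by (intro frac_le) auto
    qed
    also have "\<dots> < e" using N by simp
    finally show "norm (g w - 1 / (w - a)) < e" .
  qed
  ultimately show "\<exists>g. papprox K g \<and> (\<forall>w\<in>K. norm (g w - 1 / (w - a)) < e)" by blast
qed

lemma runge_pole:
  fixes K :: "complex set"
  assumes K: "compact K" and conn: "connected (- K)" and w0: "w0 \<notin> K"
  shows "papprox K (\<lambda>w. 1 / (w - w0))"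
proof (cases "K = {}")
  case True
  then show ?thesis unfolding papprox_def by auto
next
  case Kne: False
  have clK: "closed K" using K by (rule compact_imp_closed)
  define d where "d a = infdist a K" for a
  have dpos: "d a > 0" if "a \<notin> K" for a
    using infdist_pos_not_in_closed[OF clK Kne that] by (simp add: d_def)
  have dle: "d a \<le> norm (w - a)" if "w \<in> K" for a w
    using infdist_le[OF that, of a] by (simp add: d_def dist_norm norm_minus_commute)
  define A where "A = {a. a \<notin> K \<and> papprox K (\<lambda>w. 1 / (w - a))}"
  define B where "B = {a. a \<notin> K \<and> \<not> papprox K (\<lambda>w. 1 / (w - a))}"
  have notK: "b \<notin> K" if "a \<notin> K" "dist a b < d a" for a b
  proof
    assume "b \<in> K"
    then have "d a \<le> norm (b - a)" by (rule dle)
    then show False using that by (simp add: dist_norm norm_minus_commute)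
  qed
  have oA: "open A"
    unfolding open_contains_ball
  proof
    fix a assume a: "a \<in> A"
    then have aK: "a \<notin> K" and pa: "papprox K (\<lambda>w. 1 / (w - a))" by (auto simp: A_def)
    have "ball a (d a / 2) \<subseteq> A"
    proof
      fix b assume "b \<in> ball a (d a / 2)"
      then have ab: "dist a b < d a / 2" by simp
      then have "b \<notin> K" using notK[OF aK] dpos[OF aK] by simp
      moreover have "papprox K (\<lambda>w. 1 / (w - b))"
        using papprox_ball[OF K dpos[OF aK] _ pa, of b] dle ab
        by (simp add: dist_norm norm_minus_commute)
      ultimately show "b \<in> A" by (simp add: A_def)
    qed
    then show "\<exists>e>0. ball a e \<subseteq> A" using dpos[OF aK] by (intro exI[of _ "d a / 2"]) auto
  qed
  have oB: "open B"
    unfolding open_contains_ball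
  proof
    fix b assume b: "b \<in> B"
    then have bK: "b \<notin> K" and pb: "\<not> papprox K (\<lambda>w. 1 / (w - b))" by (auto simp: B_def)
    have "ball b (d b / 3) \<subseteq> B"
    proof
      fix c assume "c \<in> ball b (d b / 3)"
      then have bc: "dist b c < d b / 3" by simp
      then have cK: "c \<notin> K" using notK[OF bK] dpos[OF bK] by simp
      moreover have "\<not> papprox K (\<lambda>w. 1 / (w - c))"
      proof
        assume pc: "papprox K (\<lambda>w. 1 / (w - c))"
        have "d b \<le> d c + dist b c" unfolding d_def by (rule infdist_triangle)
        then have "norm (b - c) \<le> d c / 2" using bc by (simp add: dist_norm)
        then have "papprox K (\<lambda>w. 1 / (w - b))"
          using papprox_ball[OF K dpos[OF cK] _ pc, of b] dle by simp
        then show False using pb by simp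
      qed
      ultimately show "c \<in> B" by (simp add: B_def)
    qed
    then show "\<exists>e>0. ball b e \<subseteq> B" using dpos[OF bK] by (intro exI[of _ "d b / 3"]) auto
  qed
  obtain B0 where B0: "B0 \<ge> 0" "\<forall>w\<in>K. norm w \<le> B0"
    using compact_imp_bounded[OF K] bounded_iff by (metis norm_ge_zero order.trans)
  define a0 :: complex where "a0 = of_real (2 * B0 + 2)"
  have na0: "norm a0 = 2 * B0 + 2" unfolding a0_def norm_of_real using B0 by simp
  have a0K: "a0 \<notin> K" using B0 na0 by force
  have "a0 \<in> A" using papprox_far[OF K B0] na0 a0K by (simp add: A_def)
  have "A \<inter> B \<inter> - K = {}" "- K \<subseteq> A \<union> B" by (auto simp: A_def B_def)
  from connectedD[OF conn oA oB this] \<open>a0 \<in> A\<close> a0K have "B \<inter> - K = {}" by blast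
  then show ?thesis using w0 by (auto simp: B_def)
qed

lemma runge_peak:
  fixes K :: "complex set"
  assumes K: "compact K" and conn: "connected (- K)" and w0: "w0 \<notin> K"
  shows "\<exists>q. poly q w0 = 1 \<and> (\<forall>w\<in>K. norm (poly q w) < 1)"
proof -
  obtain Bd where Bd: "Bd \<ge> 0" "\<forall>w\<in>K. norm (w - w0) \<le> Bd"
  proof -
    have "compact ((\<lambda>w. w - w0) ` K)" by (intro compact_continuous_image continuous_intros K)
    then obtain B where "\<forall>x\<in>(\<lambda>w. w - w0) ` K. norm x \<le> B"
      using compact_imp_bounded bounded_iff by metis
    then show ?thesis using that[of "max B 0"] by force
  qed
  obtain q0 where q0: "\<forall>w\<in>K. norm (poly q0 w - 1 / (w - w0)) < 1 / (Bd + 1)"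
    using runge_pole[OF K conn w0] Bd unfolding papprox_def
    by (metis add_nonneg_pos less_numeral_extra(1) zero_less_divide_1_iff)
  define q where "q = [:1:] - [:- w0, 1:] * q0"
  have "poly q w0 = 1" by (simp add: q_def)
  moreover have "\<forall>w\<in>K. norm (poly q w) < 1"
  proof
    fix w assume w: "w \<in> K"
    have ww: "w - w0 \<noteq> 0" using w w0 by auto
    have "poly q w = - ((w - w0) * (poly q0 w - 1 / (w - w0)))"
      using ww by (simp add: q_def field_simps)
    then have "norm (poly q w) = norm (w - w0) * norm (poly q0 w - 1 / (w - w0))"
      by (simp add: norm_mult)
    also have "\<dots> < norm (w - w0) * (1 / (Bd + 1))"
      using q0 w ww by (intro mult_strict_left_mono) auto
    also have "\<dots> \<le> Bd * (1 / (Bd + 1))"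
      using Bd w by (intro mult_right_mono) auto
    also have "\<dots> < 1" using Bd by (simp add: field_simps)
    finally show "norm (poly q w) < 1" .
  qed
  ultimately show ?thesis by blast
qed

lemma poly_sum_lessThan:
  fixes P :: "complex poly"
  assumes "degree P < n"
  shows "poly P x = (\<Sum>i<n. coeff P i * x ^ i)"
  unfolding poly_altdef
  by (rule sum.mono_neutral_left) (use assms in \<open>auto simp: coeff_eq_0\<close>)

lemma hol_poly2_prod: "hol_poly2 (\<lambda>(z, w). poly A z * poly Q w)"
  unfolding hol_poly2_def
proof (intro exI)
  define n where "n = Suc (max (degree A) (degree Q))"
  have "(\<lambda>(z, w). poly A z * poly Q w)
      = (\<lambda>(z, w). \<Sum>i<n. \<Sum>j<n. (coeff A i * coeff Q j) * z ^ i * w ^ j)"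
  proof (intro ext, clarify)
    fix z w :: complex
    have "poly A z * poly Q w = (\<Sum>i<n. coeff A i * z ^ i) * (\<Sum>j<n. coeff Q j * w ^ j)"
      by (subst (1 2) poly_sum_lessThan[where n=n]) (auto simp: n_def)
    also have "\<dots> = (\<Sum>i<n. \<Sum>j<n. (coeff A i * z ^ i) * (coeff Q j * w ^ j))"
      by (rule sum_product)
    also have "\<dots> = (\<Sum>i<n. \<Sum>j<n. (coeff A i * coeff Q j) * z ^ i * w ^ j)"
      by (simp add: ac_simps)
    finally show "poly A z * poly Q w = (\<Sum>i<n. \<Sum>j<n. (coeff A i * coeff Q j) * z ^ i * w ^ j)" .
  qed
  then show "(\<lambda>(z, w). poly A z * poly Q w)
      = (\<lambda>(z, w). \<Sum>i<n. \<Sum>j<n. (\<lambda>i j. coeff A i * coeff Q j) i j * z ^ i * w ^ j)" by simp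
qed

lemma hol_poly2_cont:
  assumes "hol_poly2 p"
  shows "continuous_on S p"
proof -
  obtain n c where p: "p = (\<lambda>(z, w). \<Sum>i<n. \<Sum>j<n. c i j * z ^ i * w ^ j)"
    using assms unfolding hol_poly2_def by blast
  have "p = (\<lambda>y. \<Sum>i<n. \<Sum>j<n. c i j * fst y ^ i * snd y ^ j)"
    unfolding p by (auto simp: case_prod_beta)
  then show ?thesis by (simp add: continuous_intros)
qed

lemma hull_exclude:
  assumes "K \<noteq> {}" "hol_poly2 p" "\<forall>y\<in>K. norm (p y) \<le> c" "c < norm (p z)"
  shows "z \<notin> poly_hull K"
proof
  assume "z \<in> poly_hull K"
  then have "norm (p z) \<le> (SUP y\<in>K. norm (p y))"
    using assms(2) unfolding poly_hull_def by blast
  also have "\<dots> \<le> c" using assms(1,3) by (intro cSUP_least) auto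
  finally show False using assms(4) by simp
qed

lemma hull_contains:
  assumes "compact K"
  shows "K \<subseteq> poly_hull K"
  unfolding poly_hull_def
proof (clarify)
  fix z p assume z: "z \<in> K" and p: "hol_poly2 p"
  have "compact ((\<lambda>y. norm (p y)) ` K)"
    by (intro compact_continuous_image assms continuous_on_norm hol_poly2_cont p)
  then have "bdd_above ((\<lambda>y. norm (p y)) ` K)"
    by (intro bounded_imp_bdd_above compact_imp_bounded)
  then show "norm (p z) \<le> (SUP y\<in>K. norm (p y))"
    using z by (intro cSUP_upper) auto
qed

lemma norm_fst_le': "norm (fst y) \<le> norm (y :: 'a::real_normed_vector \<times> 'b::real_normed_vector)"
  unfolding norm_prod_def by (rule real_le_rsqrt) simp

lemma M_RC_fst: "y \<in> M_RC \<Longrightarrow> fst y = complex_of_real (Re (fst y))"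
  unfolding M_RC_def by (auto elim!: Reals_cases)

lemma bounded_Re_fst:
  fixes D :: "(complex \<times> complex) set"
  assumes "compact D"
  obtains R where "R > 0" "\<forall>y\<in>D. \<bar>Re (fst y) - x0\<bar> \<le> R"
proof -
  obtain B where B: "\<forall>y\<in>D. norm y \<le> B"
    using compact_imp_bounded[OF assms] bounded_iff by metis
  have "\<bar>Re (fst y) - x0\<bar> \<le> max B 0 + \<bar>x0\<bar> + 1" if "y \<in> D" for y
  proof -
    have "\<bar>Re (fst y)\<bar> \<le> norm (fst y)" by (rule abs_Re_le_cmod)
    also have "\<dots> \<le> norm y" by (rule norm_fst_le')
    also have "\<dots> \<le> B" using B that by auto
    finally show ?thesis by linarith
  qed
  then show ?thesis using that[of "max B 0 + \<bar>x0\<bar> + 1"] by force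
qed

lemma hull_nonreal:
  fixes D :: "(complex \<times> complex) set"
  assumes D: "compact D" "D \<noteq> {}" "D \<subseteq> M_RC" and a: "Im a \<noteq> 0"
  shows "(a, w0) \<notin> poly_hull D"
proof -
  define \<alpha> where "\<alpha> = Re a"
  define b where "b = Im a"
  obtain R where R: "R > 0" "\<forall>y\<in>D. \<bar>Re (fst y) - \<alpha>\<bar> \<le> R"
    using bounded_Re_fst[OF D(1), of \<alpha>] by blast
  define Lc where "Lc = R\<^sup>2 / (2 * b\<^sup>2)"
  have b2: "b\<^sup>2 > 0" using a by (simp add: b_def)
  have Lc: "Lc \<ge> 0" "2 * Lc * b\<^sup>2 = R\<^sup>2" using b2 by (auto simp: Lc_def)
  define c where "c = Complex \<alpha> (- Lc * b)"
  define p where "p = (\<lambda>(z::complex, w::complex). poly [:-c, 1:] z * poly [:1:] w)"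
  have hp: "hol_poly2 p" unfolding p_def by (rule hol_poly2_prod)
  define C2 where "C2 = R\<^sup>2 + (Lc * b)\<^sup>2"
  have "\<forall>y\<in>D. norm (p y) \<le> sqrt C2"
  proof
    fix y assume y: "y \<in> D"
    have fy: "fst y = complex_of_real (Re (fst y))" using y D(3) M_RC_fst by blast
    have "p y = fst y - c" by (simp add: p_def case_prod_beta)
    also have "\<dots> = Complex (Re (fst y) - \<alpha>) (Lc * b)"
      by (subst fy) (simp add: c_def complex_eq_iff)
    finally have "(norm (p y))\<^sup>2 = (Re (fst y) - \<alpha>)\<^sup>2 + (Lc * b)\<^sup>2"
      by (simp add: cmod_power2)
    also have "\<dots> \<le> C2"
      using R(2) y unfolding C2_def by (simp add: abs_le_square_iff[symmetric] power2_abs)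
        (metis R(1) abs_of_pos abs_le_square_iff)
    finally show "norm (p y) \<le> sqrt C2" by (rule real_le_rsqrt)
  qed
  moreover have "sqrt C2 < norm (p (a, w0))"
  proof -
    have "p (a, w0) = Complex 0 (b + Lc * b)"
      by (simp add: p_def c_def complex_eq_iff \<alpha>_def b_def)
    then have "(norm (p (a, w0)))\<^sup>2 = (b + Lc * b)\<^sup>2" by (simp add: cmod_power2)
    also have "\<dots> = b\<^sup>2 + 2 * Lc * b\<^sup>2 + (Lc * b)\<^sup>2" by (simp add: power2_eq_square algebra_simps)
    also have "\<dots> > C2" using Lc b2 by (simp add: C2_def)
    finally have "C2 < (norm (p (a, w0)))\<^sup>2" .
    then show ?thesis using real_less_lsqrt
      by (metis C2_def add_nonneg_nonneg norm_ge_zero zero_le_power2)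
  qed
  ultimately show ?thesis by (intro hull_exclude[OF D(2) hp]) auto
qed

lemma peak_real:
  fixes R u \<delta> :: real
  assumes "R > 0" "\<bar>u\<bar> \<le> R"
  shows "\<bar>1 - u\<^sup>2 / R\<^sup>2\<bar> \<le> 1" "0 \<le> \<delta> \<Longrightarrow> \<delta> \<le> \<bar>u\<bar> \<Longrightarrow> \<bar>1 - u\<^sup>2 / R\<^sup>2\<bar> \<le> 1 - \<delta>\<^sup>2 / R\<^sup>2"
proof -
  have u2: "u\<^sup>2 \<le> R\<^sup>2" using assms by (simp add: abs_le_square_iff[symmetric])
  have t: "0 \<le> u\<^sup>2 / R\<^sup>2" "u\<^sup>2 / R\<^sup>2 \<le> 1" using u2 assms by (auto simp: divide_le_eq)
  then show "\<bar>1 - u\<^sup>2 / R\<^sup>2\<bar> \<le> 1" by simp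
  assume d: "0 \<le> \<delta>" "\<delta> \<le> \<bar>u\<bar>"
  then have "\<delta>\<^sup>2 \<le> u\<^sup>2" by (metis abs_of_nonneg abs_le_square_iff)
  then have "\<delta>\<^sup>2 / R\<^sup>2 \<le> u\<^sup>2 / R\<^sup>2" by (intro divide_right_mono) auto
  then show "\<bar>1 - u\<^sup>2 / R\<^sup>2\<bar> \<le> 1 - \<delta>\<^sup>2 / R\<^sup>2" using t by simp
qed

lemma poly_continuous_on: "continuous_on S (poly (q :: complex poly))"
proof -
  have pe: "poly q = (\<lambda>w. \<Sum>i\<le>degree q. coeff q i * w ^ i)"
    by (rule ext) (simp add: poly_altdef)
  show ?thesis unfolding pe by (intro continuous_intros)
qed

lemma fiber_compact:
  fixes D :: "(complex \<times> complex) set"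
  assumes "compact D"
  shows "compact {w. (a, w) \<in> D}"
proof -
  have "closed ((\<lambda>w. (a, w)) -` D)"
    by (intro closed_vimage compact_imp_closed assms continuous_intros)
  moreover have "bounded {w. (a, w) \<in> D}"
  proof -
    have "{w. (a, w) \<in> D} \<subseteq> snd ` D" by force
    moreover have "bounded (snd ` D)"
      by (intro compact_imp_bounded compact_continuous_image continuous_intros assms)
    ultimately show ?thesis using bounded_subset by blast
  qed
  ultimately show ?thesis by (simp add: compact_eq_bounded_closed vimage_def)
qed

lemma hull_real:
  fixes D :: "(complex \<times> complex) set"
  assumes D: "compact D" "D \<noteq> {}" "D \<subseteq> M_RC"
    and conn: "connected (- {w. (complex_of_real x0, w) \<in> D})"
    and w0: "(complex_of_real x0, w0) \<notin> D"
  shows "(complex_of_real x0, w0) \<notin> poly_hull D"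
proof -
  define K where "K = {w. (complex_of_real x0, w) \<in> D}"
  have K: "compact K" unfolding K_def by (rule fiber_compact[OF D(1)])
  obtain q where q: "poly q w0 = 1" "\<forall>w\<in>K. norm (poly q w) < 1"
    using runge_peak[OF K conn[folded K_def]] w0 by (auto simp: K_def)
  obtain m where m: "m < 1" "\<forall>w\<in>K. norm (poly q w) \<le> m"
  proof (cases "K = {}")
    case True then show ?thesis using that[of 0] by auto
  next
    case False
    have "continuous_on K (\<lambda>w. norm (poly q w))"
      using poly_continuous_on by (metis continuous_on_norm)
    then obtain w1 where "w1 \<in> K" "\<forall>w\<in>K. norm (poly q w) \<le> norm (poly q w1)"
      using continuous_attains_sup[OF K False] by blast
    then show ?thesis using that[of "norm (poly q w1)"] q by auto
  qed
  define \<theta> where "\<theta> = (1 + m) / 2"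
  have \<theta>: "m < \<theta>" "\<theta> < 1" using m by (auto simp: \<theta>_def)
  have contq: "continuous_on S (\<lambda>y. norm (poly q (snd y)))" for S :: "(complex \<times> complex) set"
    using poly_continuous_on by (intro continuous_intros)
  define A where "A = D \<inter> {y. \<theta> \<le> norm (poly q (snd y))}"
  have A: "compact A" unfolding A_def
    by (intro compact_Int_closed D(1) closed_Collect_le continuous_intros contq)
  have Ane: "Re (fst y) \<noteq> x0" if "y \<in> A" for y
  proof
    assume e: "Re (fst y) = x0"
    have "fst y = complex_of_real x0" using M_RC_fst[of y] that D(3) e by (auto simp: A_def)
    then have "snd y \<in> K" using that by (auto simp: K_def A_def intro: prod_eqI)
      (metis prod.collapse)
    then show False using m that \<theta> by (auto simp: A_def)
  qed
  obtain \<delta> where \<delta>: "\<delta> > 0" "\<forall>y\<in>A. \<delta> \<le> \<bar>Re (fst y) - x0\<bar>"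
  proof (cases "A = {}")
    case True then show ?thesis using that[of 1] by auto
  next
    case False
    have "continuous_on A (\<lambda>y. \<bar>Re (fst y) - x0\<bar>)" by (intro continuous_intros)
    then obtain y1 where "y1 \<in> A" "\<forall>y\<in>A. \<bar>Re (fst y1) - x0\<bar> \<le> \<bar>Re (fst y) - x0\<bar>"
      using continuous_attains_inf[OF A False] by blast
    then show ?thesis using that[of "\<bar>Re (fst y1) - x0\<bar>"] Ane by auto
  qed
  obtain R where R: "R > 0" "\<forall>y\<in>D. \<bar>Re (fst y) - x0\<bar> \<le> R"
    using bounded_Re_fst[OF D(1), of x0] by blast
  define \<delta>' where "\<delta>' = min \<delta> R"
  define \<rho> where "\<rho> = 1 - \<delta>'\<^sup>2 / R\<^sup>2"
  have \<rho>: "0 \<le> \<rho>" "\<rho> < 1"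
  proof -
    have "\<delta>'\<^sup>2 \<le> R\<^sup>2" using \<delta> R unfolding \<delta>'_def by (intro power_mono) auto
    then show "0 \<le> \<rho>" using R by (simp add: \<rho>_def divide_le_eq)
    have "\<delta>' > 0" using \<delta> R by (simp add: \<delta>'_def)
    then show "\<rho> < 1" using R by (simp add: \<rho>_def)
  qed
  obtain Q where Q: "Q \<ge> 0" "\<forall>y\<in>D. norm (poly q (snd y)) \<le> Q"
  proof -
    have "compact ((\<lambda>y. norm (poly q (snd y))) ` D)"
      by (intro compact_continuous_image contq D(1))
    then obtain B where "\<forall>x\<in>(\<lambda>y. norm (poly q (snd y))) ` D. norm x \<le> B"
      using compact_imp_bounded bounded_iff by metis
    then show ?thesis using that[of "max B 0"] by force
  qed
  obtain N where N: "\<rho> ^ N < 1 / (Q + 1)"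
    using real_arch_pow_inv[of "1 / (Q + 1)" \<rho>] Q \<rho> by auto
  have NQ: "\<rho> ^ N * Q < 1"
  proof -
    have "\<rho> ^ N * Q \<le> \<rho> ^ N * (Q + 1)" using \<rho> by (intro mult_left_mono) auto
    also have "\<dots> < 1 / (Q + 1) * (Q + 1)" using N Q by (intro mult_strict_right_mono) auto
    finally show ?thesis using Q by simp
  qed
  define P where "P = ([:1:] - smult (complex_of_real (1 / R\<^sup>2)) ([:- complex_of_real x0, 1:] ^ 2)) ^ N"
  have polyP: "poly P (complex_of_real s) = complex_of_real ((1 - (s - x0)\<^sup>2 / R\<^sup>2) ^ N)" for s
  proof -
    have "poly ([:1:] - smult (complex_of_real (1 / R\<^sup>2)) ([:- complex_of_real x0, 1:] ^ 2)) (complex_of_real s)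
        = complex_of_real (1 - (s - x0)\<^sup>2 / R\<^sup>2)"
      using R(1) by (simp add: power2_eq_square field_simps)
    then show ?thesis by (simp add: P_def)
  qed
  define p where "p = (\<lambda>(z::complex, w::complex). poly P z * poly q w)"
  have hp: "hol_poly2 p" unfolding p_def by (rule hol_poly2_prod)
  have pz0: "p (complex_of_real x0, w0) = 1" using polyP[of x0] q(1) by (simp add: p_def)
  have "\<forall>y\<in>D. norm (p y) \<le> max (\<rho> ^ N * Q) \<theta>"
  proof
    fix y assume y: "y \<in> D"
    define s where "s = Re (fst y)"
    have fy: "fst y = complex_of_real s" using y D(3) M_RC_fst s_def by blast
    have py: "p y = poly P (complex_of_real s) * poly q (snd y)"
      by (simp add: p_def case_prod_beta fy)
    have sR: "\<bar>s - x0\<bar> \<le> R" using R y by (simp add: s_def)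
    have nP: "norm (poly P (complex_of_real s)) = \<bar>1 - (s - x0)\<^sup>2 / R\<^sup>2\<bar> ^ N"
      by (simp only: polyP norm_of_real power_abs)
    show "norm (p y) \<le> max (\<rho> ^ N * Q) \<theta>"
    proof (cases "y \<in> A")
      case True
      have "\<delta> \<le> \<bar>s - x0\<bar>" using \<delta> True by (simp add: s_def)
      then have "\<delta>' \<le> \<bar>s - x0\<bar>" by (simp add: \<delta>'_def)
      then have "\<bar>1 - (s - x0)\<^sup>2 / R\<^sup>2\<bar> \<le> \<rho>"
        using peak_real(2)[OF R(1) sR, of \<delta>'] \<delta> R by (simp add: \<rho>_def \<delta>'_def)
      then have "norm (poly P (complex_of_real s)) \<le> \<rho> ^ N"
        unfolding nP by (intro power_mono) auto
      then have "norm (p y) \<le> \<rho> ^ N * Q"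
        unfolding py norm_mult using Q y \<rho> by (intro mult_mono) auto
      then show ?thesis by simp
    next
      case False
      then have "norm (poly q (snd y)) < \<theta>" using y by (auto simp: A_def)
      moreover have "norm (poly P (complex_of_real s)) \<le> 1"
        unfolding nP using peak_real(1)[OF R(1) sR] by (intro power_le_one) auto
      ultimately have "norm (p y) \<le> 1 * \<theta>"
        unfolding py norm_mult by (intro mult_mono) auto
      then show ?thesis by simp
    qed
  qed
  moreover have "max (\<rho> ^ N * Q) \<theta> < norm (p (complex_of_real x0, w0))"
    using pz0 NQ \<theta> by simp
  ultimately show ?thesis by (rule hull_exclude[OF D(2) hp])
qed

lemma hull_main:
  fixes D :: "(complex \<times> complex) set"
  assumes D: "compact D" "D \<noteq> {}" "D \<subseteq> M_RC"
    and conn: "\<And>x0. connected (- {w. (complex_of_real x0, w) \<in> D})"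
  shows "poly_hull D = D"
proof
  show "D \<subseteq> poly_hull D" by (rule hull_contains[OF D(1)])
  show "poly_hull D \<subseteq> D"
  proof
    fix z assume z: "z \<in> poly_hull D"
    obtain a w0 where zz: "z = (a, w0)" by fastforce
    show "z \<in> D"
    proof (rule ccontr)
      assume nz: "z \<notin> D"
      show False
      proof (cases "Im a = 0")
        case True
        then have "a = complex_of_real (Re a)" by (simp add: complex_eq_iff)
        then show False using hull_real[OF D conn, of "Re a" w0] nz z zz by auto
      next
        case False
        then show False using hull_nonreal[OF D False, of w0] z zz by auto
      qed
    qed
  qed
qed

lemma deriv_range:
  fixes \<phi> :: "'a::euclidean_space \<Rightarrow> 'c::euclidean_space"
    and h :: "'b::euclidean_space \<Rightarrow> 'c" and \<psi> :: "'b \<Rightarrow> 'a"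
  assumes dphi: "(\<phi> has_derivative L) (at x0)" and injL: "inj L"
    and dh: "(h has_derivative H) (at z)"
    and cpsi: "isCont \<psi> z" and psiz: "\<psi> z = x0"
    and eq: "\<forall>y\<in>T. \<phi> (\<psi> y) = h y" and T: "open T" "z \<in> T"
  shows "H v \<in> range L"
proof -
  have blL: "bounded_linear L" using dphi by (rule has_derivative_bounded_linear)
  then have linL: "linear L" by (rule bounded_linear.linear)
  obtain L' where L': "linear L'" "L' \<circ> L = id"
    using linear_injective_left_inverse[OF linL injL] by blast
  have L'L: "L' (L x) = x" for x using L'(2) by (metis comp_apply id_apply)
  have blL': "bounded_linear L'" using L'(1) linear_conv_bounded_linear by blast
  obtain B where B: "B > 0" "\<forall>y. norm (L' y) \<le> norm y * B"
    using bounded_linear.pos_bounded[OF blL'] by blast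
  define P where "P y = y - L (L' y)" for y
  have blP: "bounded_linear P" unfolding P_def
    by (intro bounded_linear_sub bounded_linear_ident bounded_linear_compose[OF blL blL'])
  obtain C where C: "C > 0" "\<forall>y. norm (P y) \<le> norm y * C"
    using bounded_linear.pos_bounded[OF blP] by blast
  have blH: "bounded_linear H" using dh by (rule has_derivative_bounded_linear)
  obtain KH where KH: "KH > 0" "\<forall>y. norm (H y) \<le> norm y * KH"
    using bounded_linear.pos_bounded[OF blH] by blast
  have PL: "P (L x) = 0" for x by (simp add: P_def L'L)
  have "((\<lambda>y. P (h y)) has_derivative (\<lambda>_. 0)) (at z)"
    unfolding has_derivative_at_alt
  proof (intro conjI allI impI)
    show "bounded_linear (\<lambda>_::'b. 0::'c)" by (rule bounded_linear_zero)
    fix e :: real assume e: "e > 0"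
    define \<epsilon> where "\<epsilon> = min (1 / (2 * B)) (e / (C * 2 * B * (KH + 1)))"
    have \<epsilon>: "\<epsilon> > 0" "\<epsilon> * B \<le> 1/2" "C * \<epsilon> * (2 * B * (KH + 1)) \<le> e"
    proof -
      show "\<epsilon> > 0" using B C KH e by (simp add: \<epsilon>_def)
      have "\<epsilon> \<le> 1 / (2 * B)" by (simp add: \<epsilon>_def)
      then have "\<epsilon> * B \<le> 1 / (2 * B) * B" using B by (intro mult_right_mono) auto
      then show "\<epsilon> * B \<le> 1/2" using B by simp
      have Zp: "C * 2 * B * (KH + 1) > 0" using B C KH by simp
      have "\<epsilon> \<le> e / (C * 2 * B * (KH + 1))" by (simp add: \<epsilon>_def)
      then have "\<epsilon> * (C * 2 * B * (KH + 1)) \<le> e" using Zp by (simp add: pos_le_divide_eq)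
      then show "C * \<epsilon> * (2 * B * (KH + 1)) \<le> e" by (simp add: algebra_simps)
    qed
    obtain d2 where d2: "d2 > 0" "\<forall>x. norm (x - x0) < d2 \<longrightarrow> norm (\<phi> x - \<phi> x0 - L (x - x0)) \<le> \<epsilon> * norm (x - x0)"
      using dphi \<epsilon>(1) unfolding has_derivative_at_alt by blast
    obtain d1 where d1: "d1 > 0" "\<forall>y. norm (y - z) < d1 \<longrightarrow> norm (h y - h z - H (y - z)) \<le> 1 * norm (y - z)"
      using dh unfolding has_derivative_at_alt by (meson zero_less_one)
    obtain d3 where d3: "d3 > 0" "\<forall>y. dist y z < d3 \<longrightarrow> dist (\<psi> y) (\<psi> z) < d2"
      using cpsi d2(1) unfolding continuous_at_eps_delta by blast
    obtain d4 where d4: "d4 > 0" "ball z d4 \<subseteq> T"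
      using T open_contains_ball by blast
    define d where "d = min (min d1 d3) d4"
    show "\<exists>d>0. \<forall>y. norm (y - z) < d \<longrightarrow> norm (P (h y) - P (h z) - 0) \<le> e * norm (y - z)"
    proof (intro exI[of _ d] conjI allI impI)
      show "d > 0" using d1 d3 d4 by (simp add: d_def)
      fix y assume y: "norm (y - z) < d"
      define X where "X = \<psi> y - x0"
      have yT: "y \<in> T" using y d4 by (auto simp: d_def dist_norm norm_minus_commute)
      have X: "norm X < d2" using d3 y psiz by (auto simp: d_def X_def dist_norm)
      define r where "r = \<phi> (\<psi> y) - \<phi> x0 - L X"
      have r: "norm r \<le> \<epsilon> * norm X" using d2 X by (simp add: r_def X_def)
      have hyz: "h y - h z = L X + r"
        using eq yT T(2) psiz by (simp add: r_def) (metis)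
      have nh: "norm (h y - h z) \<le> (KH + 1) * norm (y - z)"
      proof -
        have "norm (h y - h z) \<le> norm (H (y - z)) + norm (h y - h z - H (y - z))"
          by (metis add.commute diff_add_cancel norm_triangle_ineq)
        also have "\<dots> \<le> norm (y - z) * KH + 1 * norm (y - z)"
          using KH d1 y by (intro add_mono) (auto simp: d_def)
        finally show ?thesis by (simp add: algebra_simps)
      qed
      have nX: "norm X \<le> 2 * B * (KH + 1) * norm (y - z)"
      proof -
        have "norm X = norm (L' (L X))" by (simp add: L'L)
        also have "\<dots> \<le> norm (L X) * B" using B by auto
        also have "L X = (h y - h z) - r" using hyz by simp
        also have "norm ((h y - h z) - r) * B \<le> (norm (h y - h z) + norm r) * B"
          using B by (intro mult_right_mono norm_triangle_ineq4) auto
        also have "\<dots> \<le> ((KH + 1) * norm (y - z) + \<epsilon> * norm X) * B"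
          using B nh r by (intro mult_right_mono add_mono) auto
        also have "\<dots> = B * (KH + 1) * norm (y - z) + (\<epsilon> * B) * norm X"
          by (simp add: algebra_simps)
        also have "\<dots> \<le> B * (KH + 1) * norm (y - z) + 1/2 * norm X"
          using \<epsilon>(2) by (intro add_left_mono mult_right_mono) auto
        finally show ?thesis by (simp add: algebra_simps)
      qed
      have "P (h y) - P (h z) = P r"
        using hyz PL linear_diff[OF bounded_linear.linear[OF blP]]
          linear_add[OF bounded_linear.linear[OF blP]] by (metis add_0)
      then have "norm (P (h y) - P (h z) - 0) = norm (P r)" by simp
      also have "\<dots> \<le> norm r * C" using C by auto
      also have "\<dots> \<le> (\<epsilon> * norm X) * C" using C r by (intro mult_right_mono) auto
      also have "\<dots> \<le> (\<epsilon> * (2 * B * (KH + 1) * norm (y - z))) * C"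
        using C \<epsilon> nX by (intro mult_right_mono mult_left_mono) auto
      also have "\<dots> = (C * \<epsilon> * (2 * B * (KH + 1))) * norm (y - z)" by (simp add: algebra_simps)
      also have "\<dots> \<le> e * norm (y - z)" using \<epsilon>(3) by (intro mult_right_mono) auto
      finally show "norm (P (h y) - P (h z) - 0) \<le> e * norm (y - z)" .
    qed
  qed
  moreover have "((\<lambda>y. P (h y)) has_derivative (\<lambda>v. P (H v))) (at z)"
    by (rule bounded_linear.has_derivative[OF blP dh])
  ultimately have "(\<lambda>v. P (H v)) = (\<lambda>_. 0)" by (metis has_derivative_unique)
  then have "P (H v) = 0" by metis
  then have "H v = L (L' (H v))" by (simp add: P_def)
  then show ?thesis by (metis rangeI)
qed

lemma gradient_nonzero:
  fixes h :: "complex \<Rightarrow> complex \<times> complex" and g :: "complex \<times> complex \<Rightarrow> complex"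
  assumes trs: "totally_real_submanifold TYPE('a::euclidean_space) N"
    and DN: "D \<subseteq> N" and DM: "D \<subseteq> M_RC"
    and hD: "\<forall>y\<in>cball 0 1. h y \<in> D"
    and gh: "\<forall>y\<in>cball 0 1. g (h y) = y"
    and zeta: "\<zeta> \<in> ball 0 1"
    and dh: "(h has_derivative H) (at \<zeta>)"
    and dg: "(g has_derivative G) (at (h \<zeta>))"
    and conth: "continuous_on (ball 0 1) h"
  shows "\<exists>v. Re (fst (H v)) \<noteq> 0"
proof (rule ccontr)
  assume "\<not> (\<exists>v. Re (fst (H v)) \<noteq> 0)"
  then have Re0: "Re (fst (H v)) = 0" for v by auto
  have blH: "bounded_linear H" using dh by (rule has_derivative_bounded_linear)
  have linH: "linear H" using blH by (rule bounded_linear.linear)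
  have bl_imfst: "bounded_linear (\<lambda>x::complex \<times> complex. Im (fst x))"
    by (intro bounded_linear_compose[OF bounded_linear_Im] bounded_linear_fst)
  have d1: "((\<lambda>y. Im (fst (h y))) has_derivative (\<lambda>v. Im (fst (H v)))) (at \<zeta>)"
    using bounded_linear.has_derivative[OF bl_imfst dh] by simp
  have "((\<lambda>y. Im (fst (h y))) has_derivative (\<lambda>v. 0)) (at \<zeta>)"
  proof (rule has_derivative_transform_within_open[OF has_derivative_const open_ball zeta])
    fix y assume "y \<in> ball (0::complex) 1"
    then have "h y \<in> M_RC" using hD DM by auto
    then show "0 = Im (fst (h y))" by (cases "h y") (auto simp: M_RC_def Reals_def)
  qed
  with d1 have "(\<lambda>v. Im (fst (H v))) = (\<lambda>v. 0)" by (metis has_derivative_unique)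
  then have Im0: "Im (fst (H v)) = 0" for v by metis
  have fst0: "fst (H v) = 0" for v using Re0[of v] Im0[of v] by (simp add: complex_eq_iff)
  have "((\<lambda>y. g (h y)) has_derivative (\<lambda>v. G (H v))) (at \<zeta>)"
    using diff_chain_at[OF dh dg] by (simp add: o_def)
  moreover have "((\<lambda>y. g (h y)) has_derivative (\<lambda>v. v)) (at \<zeta>)"
  proof (rule has_derivative_transform_within_open[OF has_derivative_ident open_ball zeta])
    fix y assume "y \<in> ball (0::complex) 1"
    then show "y = g (h y)" using gh by auto
  qed
  ultimately have GH: "(\<lambda>v. G (H v)) = (\<lambda>v. v)" by (metis has_derivative_unique)
  have injH: "inj H"
  proof (rule injI)
    fix x y assume "H x = H y"
    then show "x = y" using GH by metis
  qed
  define ll where "ll v = snd (H v)" for v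
  have Hl: "H v = (0, ll v)" for v using fst0[of v] by (simp add: ll_def prod_eq_iff)
  have linl: "linear ll" unfolding ll_def
    by (intro bounded_linear.linear bounded_linear_compose[OF bounded_linear_snd blH])
  have injl: "inj ll"
  proof (rule injI)
    fix x y assume "ll x = ll y"
    then have "H x = H y" using Hl by metis
    then show "x = y" using injH by (simp add: inj_eq)
  qed
  have surjl: "surj ll" using linl injl by (rule linear_inj_imp_surj)
  define p where "p = h \<zeta>"
  have pD: "p \<in> D" using hD zeta by (auto simp: p_def)
  then have pN: "p \<in> N" using DN by auto
  obtain U :: "'a set" and W \<phi> where
    chart: "open U" "open W" "p \<in> W" "inj_on \<phi> U" "\<phi> ` U = N \<inter> W"
      "continuous_on (N \<inter> W) (inv_into U \<phi>)"
      "\<forall>x\<in>U. \<exists>L. (\<phi> has_derivative L) (at x) \<and> inj L \<and> (\<forall>v w. L v = cmul_i (L w) \<longrightarrow> L v = 0)"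
    using trs pN unfolding totally_real_submanifold_def by meson
  have "p \<in> \<phi> ` U" using chart(5) pN chart(3) by auto
  then obtain x0 where x0: "x0 \<in> U" "\<phi> x0 = p" by auto
  obtain L where L: "(\<phi> has_derivative L) (at x0)" "inj L" "\<forall>v w. L v = cmul_i (L w) \<longrightarrow> L v = 0"
    using chart(7) x0(1) by blast
  define T where "T = ball 0 1 \<inter> h -` W"
  have oT: "open T" unfolding T_def by (rule continuous_open_preimage[OF conth open_ball chart(2)])
  have zT: "\<zeta> \<in> T" using zeta chart(3) by (simp add: T_def p_def)
  have hT: "h y \<in> N \<inter> W" if "y \<in> T" for y
    using that hD DN by (auto simp: T_def)
  define \<psi> where "\<psi> y = inv_into U \<phi> (h y)" for y
  have eq: "\<forall>y\<in>T. \<phi> (\<psi> y) = h y"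
  proof
    fix y assume "y \<in> T"
    then have "h y \<in> \<phi> ` U" using hT chart(5) by auto
    then show "\<phi> (\<psi> y) = h y" unfolding \<psi>_def by (rule f_inv_into_f)
  qed
  have psiz: "\<psi> \<zeta> = x0" unfolding \<psi>_def p_def[symmetric] x0(2)[symmetric]
    using chart(4) x0(1) by (rule inv_into_f_f)
  have "continuous_on T \<psi>" unfolding \<psi>_def
  proof (rule continuous_on_compose2[OF chart(6)])
    show "continuous_on T h" using conth by (rule continuous_on_subset) (auto simp: T_def)
    show "h ` T \<subseteq> N \<inter> W" using hT by auto
  qed
  then have cpsi: "isCont \<psi> \<zeta>" using oT zT continuous_on_eq_continuous_at by blast
  have rng: "H v \<in> range L" for v
    by (rule deriv_range[OF L(1) L(2) dh cpsi psiz eq oT zT])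
  obtain t where t: "ll t = \<i> * ll 1" using surjl by (metis surjD)
  have "H t = cmul_i (H 1)" using Hl t by (simp add: cmul_i_def)
  moreover obtain a where a: "H t = L a" using rng[of t] by auto
  moreover obtain b where b: "H 1 = L b" using rng[of 1] by auto
  ultimately have "L a = cmul_i (L b)" by simp
  then have "L a = 0" using L(3) by blast
  then have "H t = H 0" using a linear_0[OF linH] by simp
  then have "t = 0" using injH by (simp add: inj_eq)
  then have "ll 1 = 0" using t linear_0[OF linl] by simp
  then have "H 1 = H 0" using Hl linear_0[OF linH] by (simp add: zero_prod_def)
  then show False using injH by (simp add: inj_eq)
qed

lemma level_complement_connected:
  fixes u :: "complex \<Rightarrow> real"
  assumes cont: "continuous_on (cball 0 1) u"
    and grad: "\<And>z. z \<in> ball 0 1 \<Longrightarrow> \<exists>U'. (u has_derivative U') (at z) \<and> U' \<noteq> (\<lambda>v. 0)"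
  shows "connected (- {z \<in> cball 0 1. u z = x0})"
proof (rule ccontr)
  define S where "S = {z \<in> cball 0 1. u z = x0}"
  assume nc: "\<not> connected (- {z \<in> cball 0 1. u z = x0})"
  have S_eq: "S = cball 0 1 \<inter> u -` {x0}" by (auto simp: S_def)
  have clS: "closed S" unfolding S_eq
    by (rule continuous_closed_preimage[OF cont closed_cball closed_singleton])
  have Sc: "S \<subseteq> cball 0 1" by (auto simp: S_def)
  have "bounded (- (- S))" using Sc bounded_cball bounded_subset by auto
  then obtain C where C: "C \<in> components (- S)" "bounded C"
    using cobounded_has_bounded_component[of "- S"] nc by (auto simp: S_def)
  have oC: "open C" using open_components[OF _ C(1)] clS by auto
  have Cne: "C \<noteq> {}" using C(1) by (rule in_components_nonempty)
  have CS: "C \<subseteq> - S" using C(1) by (rule in_components_subset)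
  have Cc: "C \<subseteq> cball 0 1"
  proof (rule ccontr)
    assume "\<not> C \<subseteq> cball 0 1"
    then have int: "C \<inter> - cball 0 1 \<noteq> {}" by auto
    have conn: "connected (- cball (0::complex) 1)"
      by (rule connected_complement_bounded_convex) auto
    have "- cball 0 1 \<subseteq> - S" using Sc by auto
    then have "- cball 0 1 \<subseteq> C" using components_maximal[OF C(1) conn _ int] by auto
    then have "bounded (- cball (0::complex) 1)" using C(2) bounded_subset by auto
    then have b: "bounded (cball 0 1 \<union> - cball (0::complex) 1)"
      by (simp only: bounded_Un bounded_cball simp_thms)
    have eq: "cball 0 1 \<union> - cball (0::complex) 1 = UNIV" by auto
    from b show False unfolding eq by (rule not_bounded_UNIV[THEN notE])
  qed
  have Cb: "C \<subseteq> ball 0 1" using interior_maximal[OF Cc oC] by (simp add: interior_cball)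
  have fr: "frontier C \<subseteq> S" by (rule frontier_of_components_closed_complement[OF clS C(1)])
  have clC: "closure C \<subseteq> C \<union> S" using fr closure_Un_frontier by auto
  have clCc: "closure C \<subseteq> cball 0 1" by (rule closure_minimal[OF Cc closed_cball])
  have cpt: "compact (closure C)" using C(2) by (simp add: compact_closure)
  have contC: "continuous_on (closure C) u" by (rule continuous_on_subset[OF cont clCc])
  have clne: "closure C \<noteq> {}" using Cne by simp
  obtain m1 where m1: "m1 \<in> closure C" "\<forall>y\<in>closure C. u y \<le> u m1"
    using continuous_attains_sup[OF cpt clne contC] by blast
  obtain m2 where m2: "m2 \<in> closure C" "\<forall>y\<in>closure C. u m2 \<le> u y"
    using continuous_attains_inf[OF cpt clne contC] by blast
  have interior_extr: False if "m \<in> closure C" "u m \<noteq> x0"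
      "(\<forall>y\<in>C. u y \<le> u m) \<or> (\<forall>y\<in>C. u m \<le> u y)" for m
  proof -
    have "m \<notin> S" using that by (auto simp: S_def)
    then have mC: "m \<in> C" using clC that(1) by auto
    then obtain U' where U': "(u has_derivative U') (at m)" "U' \<noteq> (\<lambda>v. 0)"
      using grad Cb by blast
    have "U' = (\<lambda>v. 0)" by (rule differential_zero_maxmin[OF mC oC U'(1) that(3)])
    then show False using U'(2) by simp
  qed
  have "u m1 \<le> x0"
  proof (rule ccontr)
    assume "\<not> u m1 \<le> x0"
    moreover have "\<forall>y\<in>C. u y \<le> u m1" using m1(2) closure_subset by blast
    ultimately show False using interior_extr[of m1] m1(1) by linarith
  qed
  moreover have "x0 \<le> u m2"
  proof (rule ccontr)
    assume "\<not> x0 \<le> u m2"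
    moreover have "\<forall>y\<in>C. u m2 \<le> u y" using m2(2) closure_subset by blast
    ultimately show False using interior_extr[of m2] m2(1) by linarith
  qed
  moreover obtain y where y: "y \<in> C" using Cne by auto
  moreover have "u y \<le> u m1" "u m2 \<le> u y" using m1(2) m2(2) closure_subset y by auto
  ultimately have "u y = x0" by linarith
  then have "y \<in> S" using y Cc by (auto simp: S_def)
  then show False using y CS by auto
qed

lemma fiber_connected:
  assumes tr: "totally_real_disc TYPE('a::euclidean_space) D" and DM: "D \<subseteq> M_RC"
  shows "connected (- {w. (complex_of_real x0, w) \<in> D})"
proof -
  obtain N where trs: "totally_real_submanifold TYPE('a) N" and DN: "D \<subseteq> N"
    and cD: "compact D" and dif: "C2_diffeomorphic (cball (0::complex) 1) D"
    using tr unfolding totally_real_disc_def by blast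
  obtain h g where hom: "homeomorphism (cball (0::complex) 1) D h g" and
    C2h: "C2_on (cball 0 1) h" and C2g: "C2_on D g"
    using dif unfolding C2_diffeomorphic_def by blast
  obtain V Df D2f where V: "open V" "cball 0 1 \<subseteq> V"
    "\<forall>x\<in>V. (h has_derivative blinfun_apply (Df x)) (at x)"
    using C2h unfolding C2_on_def by blast
  obtain V' Dg D2g where V': "open V'" "D \<subseteq> V'"
    "\<forall>x\<in>V'. (g has_derivative blinfun_apply (Dg x)) (at x)"
    using C2g unfolding C2_on_def by blast
  have gh: "\<forall>y\<in>cball 0 1. g (h y) = y" and hD0: "h ` cball 0 1 = D"
    and hg: "\<forall>y\<in>D. h (g y) = y" and gD: "g ` D = cball 0 1"
    and conth: "continuous_on (cball 0 1) h" and contg: "continuous_on D g"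
    using hom unfolding homeomorphism_def by auto
  have hD: "\<forall>y\<in>cball 0 1. h y \<in> D" using hD0 by auto
  define u where "u z = Re (fst (h z))" for z
  have contu: "continuous_on (cball 0 1) u" unfolding u_def
    by (intro continuous_intros conth)
  have grad: "\<exists>U'. (u has_derivative U') (at z) \<and> U' \<noteq> (\<lambda>v. 0)" if z: "z \<in> ball 0 1" for z
  proof -
    have zV: "z \<in> V" using z V(2) by auto
    have dh: "(h has_derivative blinfun_apply (Df z)) (at z)" using V(3) zV by blast
    have hzV: "h z \<in> V'" using hD z V'(2) by auto
    have dg: "(g has_derivative blinfun_apply (Dg (h z))) (at (h z))" using V'(3) hzV by blast
    have "\<exists>v. Re (fst (blinfun_apply (Df z) v)) \<noteq> 0"
      by (rule gradient_nonzero[OF trs DN DM hD gh z dh dg continuous_on_subset[OF conth ball_subset_cball]])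
    moreover have "(u has_derivative (\<lambda>v. Re (fst (blinfun_apply (Df z) v)))) (at z)"
    proof -
      have bl: "bounded_linear (\<lambda>x::complex \<times> complex. Re (fst x))"
        by (intro bounded_linear_compose[OF bounded_linear_Re] bounded_linear_fst)
      have ue: "u = (\<lambda>z. Re (fst (h z)))" by (rule ext) (simp add: u_def)
      show ?thesis unfolding ue by (rule bounded_linear.has_derivative[OF bl dh])
    qed
    ultimately show ?thesis by (metis (mono_tags, lifting))
  qed
  define S where "S = {z \<in> cball 0 1. u z = x0}"
  have connS: "connected (- S)" unfolding S_def by (rule level_complement_connected[OF contu grad])
  define K where "K = {w. (complex_of_real x0, w) \<in> D}"
  have cK: "compact K" unfolding K_def by (rule fiber_compact[OF cD])
  have cS: "compact S"
  proof -
    have "S = cball 0 1 \<inter> u -` {x0}" by (auto simp: S_def)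
    then have "closed S" using continuous_closed_preimage[OF contu closed_cball closed_singleton] by simp
    then show ?thesis using compact_cball S_def
      by (metis (no_types, lifting) bounded_cball bounded_subset compact_eq_bounded_closed mem_Collect_eq subsetI)
  qed
  have hS: "h z = (complex_of_real x0, snd (h z))" if "z \<in> S" for z
  proof -
    have "h z \<in> M_RC" using that hD DM by (auto simp: S_def)
    then have "fst (h z) = complex_of_real (Re (fst (h z)))" by (rule M_RC_fst)
    also have "Re (fst (h z)) = x0" using that by (simp add: S_def u_def)
    finally show ?thesis by (simp add: prod_eq_iff)
  qed
  have "homeomorphism S K (\<lambda>z. snd (h z)) (\<lambda>w. g (complex_of_real x0, w))"
  proof (rule homeomorphismI)
    show "continuous_on S (\<lambda>z. snd (h z))"
      by (intro continuous_intros continuous_on_subset[OF conth]) (auto simp: S_def)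
    show "continuous_on K (\<lambda>w. g (complex_of_real x0, w))"
      by (rule continuous_on_compose2[OF contg]) (auto intro!: continuous_intros simp: K_def)
    show "(\<lambda>z. snd (h z)) ` S \<subseteq> K"
    proof clarify
      fix z assume "z \<in> S"
      then show "snd (h z) \<in> K" using hS[of z] hD by (auto simp: K_def S_def)
    qed
    show "(\<lambda>w. g (complex_of_real x0, w)) ` K \<subseteq> S"
    proof clarify
      fix w assume w: "w \<in> K"
      then have inD: "(complex_of_real x0, w) \<in> D" by (simp add: K_def)
      have "g (complex_of_real x0, w) \<in> cball 0 1" using gD inD by auto
      moreover have "u (g (complex_of_real x0, w)) = x0" using hg inD by (simp add: u_def)
      ultimately show "g (complex_of_real x0, w) \<in> S" by (simp add: S_def)
    qed
    show "g (complex_of_real x0, snd (h z)) = z" if "z \<in> S" for z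
      using hS[OF that] gh that by (auto simp: S_def)
    show "snd (h (g (complex_of_real x0, w))) = w" if "w \<in> K" for w
      using hg that by (simp add: K_def)
  qed
  then have "S homeomorphic K" unfolding homeomorphic_def by blast
  then have "connected (- S) = connected (- K)"
    by (rule homotopy_eqv_separation[OF homeomorphic_imp_homotopy_eqv cS cK])
  then show ?thesis using connS by (simp add: K_def)
qed

theorem corollary1p4:
  fixes D :: "(complex \<times> complex) set"
  assumes "totally_real_disc TYPE('a::euclidean_space) D"
    and "D \<subseteq> M_RC"
  shows "polynomially_convex D"
proof -
  obtain N where cD: "compact D" and dif: "C2_diffeomorphic (cball (0::complex) 1) D"
    using assms(1) unfolding totally_real_disc_def by blast
  obtain h g where hom: "homeomorphism (cball (0::complex) 1) D h g"
    using dif unfolding C2_diffeomorphic_def by blast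
  then have "h ` cball 0 1 = D" unfolding homeomorphism_def by auto
  then have "D \<noteq> {}" by (metis centre_in_cball empty_iff image_eqI zero_le_one)
  show ?thesis unfolding polynomially_convex_def
    by (rule hull_main[OF cD \<open>D \<noteq> {}\<close> assms(2) fiber_connected[OF assms]])
qed

end
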